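(* Let $G$ be a finite group and $(\Gamma,\rho)$ a voltage graph. Then $(\Gamma,\rho)$ is structurally balanced if and only if $f(c)=\mathbf 1$ for every semi-cycle $c$ of $\Gamma$.
   Context: $\Gamma=(V,E)$ is a simple digraph, $e_{ij}$ the edge $v_i\to v_j$, $\rho:E\to G$, $\mathbf 1$ the identity of $G$. A semi-walk is $w=v_{i_1}a_1\dots a_{n-1}v_{i_n}$ with each $a_j\in\{e_{i_ji_{j+1}},e_{i_{j+1}i_j}\}$; closed if $v_{i_1}=v_{i_n}$; a semi-cycle is a closed semi-walk with no repeated vertices other than the starting vertex equal to the ending vertex (a single vertex is a trivial semi-cycle). Net voltage $f(w)=\bar\rho(a_1)\cdots\bar\rho(a_{n-1})$, $\bar\rho(a_j)=\rho(a_j)$ if $a_j=e_{i_ji_{j+1}}$ and $\rho(a_j)^{-1}$ otherwise; $f=\mathbf 1$ on a single vertex. $(\Gamma,\rho)$ is structurally balanced if $f(w)=\mathbf 1$ for every closed semi-walk $w$. *)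

theory Defs
  imports "HOL-Algebra.Group"
begin

definition simple_digraph :: "'v set \<Rightarrow> ('v \<times> 'v) set \<Rightarrow> bool" where
  "simple_digraph V E \<longleftrightarrow> finite V \<and> E \<subseteq> V \<times> V \<and> (\<forall>v. (v, v) \<notin> E)"

definition voltage_graph :: "('g, 'b) monoid_scheme \<Rightarrow> 'v set \<Rightarrow> ('v \<times> 'v) set
    \<Rightarrow> ('v \<times> 'v \<Rightarrow> 'g) \<Rightarrow> bool" where
  "voltage_graph G V E \<rho> \<longleftrightarrow> group G \<and> simple_digraph V E \<and> (\<forall>e\<in>E. \<rho> e \<in> carrier G)"

definition semi_walk :: "'v set \<Rightarrow> ('v \<times> 'v) set \<Rightarrow> 'v list \<Rightarrow> ('v \<times> 'v) list \<Rightarrow> bool" where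
  "semi_walk V E vs as \<longleftrightarrow> vs \<noteq> [] \<and> set vs \<subseteq> V \<and> length as = length vs - 1 \<and>
     (\<forall>j < length as. as ! j \<in> E \<and>
        (as ! j = (vs ! j, vs ! Suc j) \<or> as ! j = (vs ! Suc j, vs ! j)))"

definition closed_semi_walk :: "'v set \<Rightarrow> ('v \<times> 'v) set \<Rightarrow> 'v list \<Rightarrow> ('v \<times> 'v) list \<Rightarrow> bool" where
  "closed_semi_walk V E vs as \<longleftrightarrow> semi_walk V E vs as \<and> hd vs = last vs"

text \<open>Semi-cycle: closed semi-walk with no repeated vertices except first = last
  (the one-vertex walk is the trivial semi-cycle).\<close>
definition semi_cycle :: "'v set \<Rightarrow> ('v \<times> 'v) set \<Rightarrow> 'v list \<Rightarrow> ('v \<times> 'v) list \<Rightarrow> bool" where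
  "semi_cycle V E vs as \<longleftrightarrow> closed_semi_walk V E vs as \<and> distinct (tl vs)"

text \<open>Net voltage f(w) = rhobar(a_1) ... rhobar(a_{n-1}); rhobar(a) = rho(a) if a is traversed
  forward (a = (v_{i_j}, v_{i_{j+1}})) and rho(a)^{-1} otherwise; f = 1 on a single vertex.\<close>
fun net_voltage :: "('g, 'b) monoid_scheme \<Rightarrow> ('v \<times> 'v \<Rightarrow> 'g) \<Rightarrow> 'v list \<Rightarrow> ('v \<times> 'v) list \<Rightarrow> 'g" where
  "net_voltage G \<rho> (u # v # vs) (a # as) =
     (if a = (u, v) then \<rho> a else inv\<^bsub>G\<^esub> (\<rho> a)) \<otimes>\<^bsub>G\<^esub> net_voltage G \<rho> (v # vs) as"
| "net_voltage G \<rho> _ _ = \<one>\<^bsub>G\<^esub>"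

definition structurally_balanced :: "('g, 'b) monoid_scheme \<Rightarrow> 'v set \<Rightarrow> ('v \<times> 'v) set
    \<Rightarrow> ('v \<times> 'v \<Rightarrow> 'g) \<Rightarrow> bool" where
  "structurally_balanced G V E \<rho> \<longleftrightarrow>
     (\<forall>vs as. closed_semi_walk V E vs as \<longrightarrow> net_voltage G \<rho> vs as = \<one>\<^bsub>G\<^esub>)"

end

theory Submission
  imports Defs
begin

fun sw :: "'v set \<Rightarrow> ('v \<times> 'v) set \<Rightarrow> 'v list \<Rightarrow> ('v \<times> 'v) list \<Rightarrow> bool" where
  "sw V E [v] [] = (v \<in> V)"
| "sw V E (u # v # vs) (a # as) = (u \<in> V \<and> a \<in> E \<and> (a = (u, v) \<or> a = (v, u)) \<and> sw V E (v # vs) as)"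
| "sw V E _ _ = False"

lemma sw_len: "sw V E vs as \<Longrightarrow> length as = length vs - 1 \<and> vs \<noteq> [] \<and> set as \<subseteq> E"
  by (induction V E vs as rule: sw.induct) auto

lemma all_less_Suc': "(\<forall>j<Suc n. P j) = (P 0 \<and> (\<forall>j<n. P (Suc j)))"
  by (auto simp: less_Suc_eq_0_disj)

lemma semi_walk_sw: "semi_walk V E vs as \<longleftrightarrow> sw V E vs as"
proof (induction vs arbitrary: as)
  case Nil
  then show ?case by (simp add: semi_walk_def)
next
  case (Cons u vs)
  show ?case
  proof (cases vs)
    case Nil
    then show ?thesis by (cases as) (auto simp: semi_walk_def)
  next
    case (Cons v vs')
    show ?thesis
    proof (cases as)
      case Nil
      then show ?thesis using Cons by (auto simp: semi_walk_def)
    next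
      case (Cons a as')
      have "semi_walk V E (u # vs) as \<longleftrightarrow>
         u \<in> V \<and> a \<in> E \<and> (a = (u, v) \<or> a = (v, u)) \<and> semi_walk V E vs as'"
        unfolding semi_walk_def using \<open>vs = v # vs'\<close> Cons
                by (auto simp: all_less_Suc')
      then show ?thesis using Cons.IH \<open>vs = v # vs'\<close> Cons by simp
    qed
  qed
qed

lemma sw_append: "length as1 = length xs \<Longrightarrow>
   sw V E (xs @ v # ys) (as1 @ as2) \<longleftrightarrow> sw V E (xs @ [v]) as1 \<and> sw V E (v # ys) as2"
proof (induction xs arbitrary: as1)
  case Nil
  then show ?case by (cases ys; cases as2) auto
next
  case (Cons x xs)
  then obtain a as1' where a: "as1 = a # as1'" "length as1' = length xs" by (cases as1) auto
  show ?case
  proof (cases xs)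
    case Nil
    then show ?thesis using a Cons.IH[OF a(2)] by simp
  next
    case (Cons y xs')
    then show ?thesis using a Cons.IH[OF a(2)] by auto
  qed
qed

lemma nv_carrier0: "group G \<Longrightarrow> \<forall>a\<in>set as. \<rho> a \<in> carrier G \<Longrightarrow> net_voltage G \<rho> vs as \<in> carrier G"
  by (induction G \<rho> vs as rule: net_voltage.induct) (auto intro: group.subgroup_self monoid.m_closed group.is_monoid group.inv_closed monoid.one_closed)

context group
begin

lemma nv_carrier: "\<forall>a\<in>set as. \<rho> a \<in> carrier G \<Longrightarrow> net_voltage G \<rho> vs as \<in> carrier G"
  using nv_carrier0 is_group by blast

lemma nv_append: "length as1 = length xs \<Longrightarrow> \<forall>a\<in>set (as1 @ as2). \<rho> a \<in> carrier G \<Longrightarrow>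
   net_voltage G \<rho> (xs @ v # ys) (as1 @ as2) =
   net_voltage G \<rho> (xs @ [v]) as1 \<otimes> net_voltage G \<rho> (v # ys) as2"
proof (induction xs arbitrary: as1)
  case Nil
  then show ?case using nv_carrier[of as2] by simp
next
  case (Cons x xs)
  then obtain a as1' where a: "as1 = a # as1'" "length as1' = length xs" by (cases as1) auto
  have c: "\<rho> a \<in> carrier G" "\<forall>b\<in>set (as1' @ as2). \<rho> b \<in> carrier G"
    using Cons.prems a by auto
  show ?case
  proof (cases xs)
    case Nil
    then show ?thesis using a Cons.IH[OF a(2) c(2)] c nv_carrier[of as2] by (auto simp add: m_assoc)
  next
    case (Cons y xs')
    then show ?thesis using a Cons.IH[OF a(2) c(2)] c nv_carrier[of as1'] nv_carrier[of as2]
      by (auto simp add: m_assoc)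
  qed
qed

end

lemma main_dir:
  assumes gr: "group G" and rc: "\<forall>e\<in>E. \<rho> e \<in> carrier G"
    and cyc: "\<forall>vs as. semi_cycle V E vs as \<longrightarrow> net_voltage G \<rho> vs as = \<one>\<^bsub>G\<^esub>"
  shows "sw V E vs as \<Longrightarrow> hd vs = last vs \<Longrightarrow> net_voltage G \<rho> vs as = \<one>\<^bsub>G\<^esub>"
proof (induction "length vs" arbitrary: vs as rule: less_induct)
  case less
  interpret group G by (rule gr)
  show ?case
  proof (cases "distinct (tl vs)")
    case True
    then show ?thesis using cyc less.prems
      by (simp add: semi_cycle_def closed_semi_walk_def semi_walk_sw)
  next
    case False
    then obtain A' w B C where tl: "tl vs = A' @ w # B @ w # C"
      using not_distinct_decomp[OF False] by fastforce
    obtain x0 where vs: "vs = (x0 # A') @ w # (B @ w # C)"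
      using tl sw_len[OF less.prems(1)] by (cases vs) auto
    define A where "A = x0 # A'"
    have L: "length as = length vs - 1" "set as \<subseteq> E" using sw_len[OF less.prems(1)] by auto
    define as1 where "as1 = take (length A) as"
    define as23 where "as23 = drop (length A) as"
    define as2 where "as2 = take (Suc (length B)) as23"
    define as3 where "as3 = drop (Suc (length B)) as23"
    have las1: "length as1 = length A" using L vs unfolding as1_def A_def by simp
    have las2: "length as2 = length (w # B)" using L vs unfolding as2_def as23_def A_def by simp
    have e1: "as = as1 @ as23" and e2: "as23 = as2 @ as3"
      unfolding as1_def as23_def as2_def as3_def by (simp_all del: drop_drop)
    have s: "sw V E (A @ [w]) as1" "sw V E (w # B @ w # C) as23"
      using sw_append[OF las1, of V E w "B @ w # C" as23] less.prems(1) vs e1 A_def by auto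
    have s2: "sw V E ((w # B) @ [w]) as2" "sw V E (w # C) as3"
      using sw_append[OF las2, of V E w C as3] s(2) e2 by auto
    have cr: "\<forall>a\<in>set as. \<rho> a \<in> carrier G" using L rc by auto
    have n1: "net_voltage G \<rho> ((w # B) @ [w]) as2 = \<one>\<^bsub>G\<^esub>"
      by (rule less.hyps[OF _ s2(1)]) (use vs in auto)
    have sj: "sw V E (A @ w # C) (as1 @ as3)" using sw_append[OF las1] s(1) s2(2) by auto
    have n2: "net_voltage G \<rho> (A @ w # C) (as1 @ as3) = \<one>\<^bsub>G\<^esub>"
      by (rule less.hyps[OF _ sj]) (use vs A_def less.prems(2) in \<open>auto simp: last_append\<close>)
    have cr1: "\<forall>a\<in>set (as1 @ as23). \<rho> a \<in> carrier G" using cr e1 by simp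
    have cr2: "\<forall>a\<in>set (as2 @ as3). \<rho> a \<in> carrier G" using cr e1 e2 by simp
    have cr3: "\<forall>a\<in>set (as1 @ as3). \<rho> a \<in> carrier G" using cr e1 e2 by auto
    have h1: "net_voltage G \<rho> vs as = net_voltage G \<rho> (A @ [w]) as1 \<otimes>\<^bsub>G\<^esub> net_voltage G \<rho> (w # B @ w # C) as23"
      using nv_append[OF las1 cr1, of w "B @ w # C"] vs A_def e1 by simp
    have h2: "net_voltage G \<rho> (w # B @ w # C) as23 = net_voltage G \<rho> ((w # B) @ [w]) as2 \<otimes>\<^bsub>G\<^esub> net_voltage G \<rho> (w # C) as3"
      using nv_append[OF las2 cr2, of w C] e2 by simp
    have h3: "net_voltage G \<rho> (A @ w # C) (as1 @ as3) = net_voltage G \<rho> (A @ [w]) as1 \<otimes>\<^bsub>G\<^esub> net_voltage G \<rho> (w # C) as3"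
      using nv_append[OF las1 cr3, of w C] by simp
    have c3: "net_voltage G \<rho> (w # C) as3 \<in> carrier G" using cr2 by (intro nv_carrier) auto
    have "net_voltage G \<rho> vs as = net_voltage G \<rho> (A @ w # C) (as1 @ as3)"
      using h1 h2 h3 n1 c3 by simp
    then show ?thesis using n2 by simp
  qed
qed

theorem lemma2:
  fixes G :: "('g, 'b) monoid_scheme" and V :: "'v set" and E :: "('v \<times> 'v) set"
    and \<rho> :: "'v \<times> 'v \<Rightarrow> 'g"
  assumes "finite (carrier G)"
    and "voltage_graph G V E \<rho>"
  shows "structurally_balanced G V E \<rho> \<longleftrightarrow>
         (\<forall>vs as. semi_cycle V E vs as \<longrightarrow> net_voltage G \<rho> vs as = \<one>\<^bsub>G\<^esub>)"
proof
  assume "structurally_balanced G V E \<rho>"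
  then show "\<forall>vs as. semi_cycle V E vs as \<longrightarrow> net_voltage G \<rho> vs as = \<one>\<^bsub>G\<^esub>"
    by (auto simp: structurally_balanced_def semi_cycle_def)
next
  assume c: "\<forall>vs as. semi_cycle V E vs as \<longrightarrow> net_voltage G \<rho> vs as = \<one>\<^bsub>G\<^esub>"
  have g: "group G" "\<forall>e\<in>E. \<rho> e \<in> carrier G" using assms(2) by (auto simp: voltage_graph_def)
  show "structurally_balanced G V E \<rho>"
    unfolding structurally_balanced_def closed_semi_walk_def semi_walk_sw
    using main_dir[OF g c] by blast
qed

end
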